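(* Let $\mu>0$, $x>0$, $y>0$, and let $n,q\ge 0$ be integers. Then $$\sum_{k=0}^{n}F_{\mu+k}(x,y)<P_{\mu}(x,y),$$ and, provided $F_{\mu+n+1}(x,y)>F_{\mu+n+q+2}(x,y)$, $$P_\mu(x,y)<\sum_{k=0}^{n}F_{\mu+k}(x,y)+U^{(q)}_{\mu+n+1}(x,y),$$ where $U_{\nu}^{(q)}(x,y)=\dfrac{\sum_{k=0}^q F_{\nu+k}(x,y)}{F_\nu(x,y)-F_{\nu+q+1}(x,y)}F_{\nu}(x,y)$.
   Context: $P_{\mu}(x,y)=x^{\frac12(1-\mu)}\int_0^{y} t^{\frac12(\mu-1)}e^{-t-x}I_{\mu-1}(2\sqrt{xt})\,dt$ for $\mu>0$, with $I_\nu$ the modified Bessel function of the first kind; $F_{\mu}(x,y)=(y/x)^{\mu/2}e^{-x-y}I_{\mu}(2\sqrt{xy})$. *)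

theory Defs
  imports "HOL-Analysis.Analysis"
begin

definition besselI :: "real \<Rightarrow> real \<Rightarrow> real" where
  "besselI \<nu> z = (\<Sum>m. (z / 2) powr (2 * real m + \<nu>) / (fact m * Gamma (real m + \<nu> + 1)))"

definition marcumP :: "real \<Rightarrow> real \<Rightarrow> real \<Rightarrow> real" where
  "marcumP \<mu> x y = x powr ((1 - \<mu>) / 2) *
     integral {0..y} (\<lambda>t. t powr ((\<mu> - 1) / 2) * exp (- t - x) * besselI (\<mu> - 1) (2 * sqrt (x * t)))"

definition marcumF :: "real \<Rightarrow> real \<Rightarrow> real \<Rightarrow> real" where
  "marcumF \<mu> x y = (y / x) powr (\<mu> / 2) * exp (- x - y) * besselI \<mu> (2 * sqrt (x * y))"

definition marcumU :: "real \<Rightarrow> nat \<Rightarrow> real \<Rightarrow> real \<Rightarrow> real" where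
  "marcumU \<nu> q x y = (\<Sum>k\<le>q. marcumF (\<nu> + real k) x y)
      / (marcumF \<nu> x y - marcumF (\<nu> + real q + 1) x y) * marcumF \<nu> x y"

end

theory Submission
  imports Defs "HOL-Computational_Algebra.Formal_Power_Series"
begin


definition phiS :: "real \<Rightarrow> real \<Rightarrow> nat \<Rightarrow> real" where
  "phiS s w m = w ^ m / (fact m * Gamma (real m + s + 1))"

definition phi :: "real \<Rightarrow> real \<Rightarrow> real" where
  "phi s w = (\<Sum>m. phiS s w m)"

lemma Gamma_fact_le:
  fixes a :: real assumes "a \<ge> 1"
  shows "Gamma a * fact k \<le> Gamma (a + real k)"
proof (induction k)
  case 0 then show ?case by simp
next
  case (Suc k)
  have nz: "a + real k \<notin> \<int>\<^sub>\<le>\<^sub>0" using assms by (auto dest: nonpos_Ints_nonpos)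
  have g: "Gamma (a + real (Suc k)) = (a + real k) * Gamma (a + real k)"
    using Gamma_plus1[OF nz] by (simp add: add_ac)
  have "Gamma a * fact (Suc k) = (real k + 1) * (Gamma a * fact k)" by simp
  also have "\<dots> \<le> (a + real k) * Gamma (a + real k)"
    apply (rule mult_mono) using assms Suc by (auto intro!: mult_nonneg_nonneg less_imp_le[OF Gamma_real_pos])
  finally show ?case using g by simp
qed

lemma phiS_nonneg: "s > -1 \<Longrightarrow> w \<ge> 0 \<Longrightarrow> phiS s w m \<ge> 0"
  unfolding phiS_def by (auto intro!: divide_nonneg_pos)

lemma phiS_pos: "s > -1 \<Longrightarrow> w > 0 \<Longrightarrow> phiS s w m > 0"
  unfolding phiS_def by (auto intro!: divide_pos_pos)

lemma summable_phiS:
  assumes s: "s > -1" and w: "w \<ge> 0"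
  shows "summable (phiS s w)"
proof -
  define C where "C = 1 / Gamma (s + 1) + 1 / Gamma (s + 2)"
  have g1: "Gamma (s+1) > 0" "Gamma (s+2) > 0" using s by auto
  have "norm (phiS s w m) \<le> C * (inverse (fact m) * w ^ m)" for m
  proof (cases m)
    case 0 then show ?thesis using g1 by (simp add: phiS_def C_def)
  next
    case (Suc j)
    have "Gamma (s+2) * fact j \<le> Gamma (s + 2 + real j)" by (rule Gamma_fact_le) (use s in auto)
    moreover have "1 \<le> (fact j :: real)" by simp
    ultimately have le: "Gamma (s+2) \<le> Gamma (real m + s + 1)"
      using Suc g1 by (smt (verit) mult_le_cancel_left1 of_nat_Suc)
    have "norm (phiS s w m) = w ^ m / (fact m * Gamma (real m + s + 1))"
      using phiS_nonneg[OF s w, of m] by (simp only: real_norm_def abs_of_nonneg) (simp add: phiS_def)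
    also have "\<dots> \<le> w ^ m / (fact m * Gamma (s+2))"
      apply (rule divide_left_mono) using le g1 w by (auto intro!: mult_left_mono mult_pos_pos)
    also have "\<dots> \<le> C * (inverse (fact m) * w ^ m)"
      using g1 w by (simp add: C_def field_simps)
    finally show ?thesis .
  qed
  moreover have "summable (\<lambda>m. C * (inverse (fact m) * w ^ m))"
    by (intro summable_mult summable_exp)
  ultimately show ?thesis using summable_comparison_test'[where N=0 and f="phiS s w"] by blast
qed

lemma phi_pos: "s > -1 \<Longrightarrow> w > 0 \<Longrightarrow> phi s w > 0"
  unfolding phi_def by (rule suminf_pos) (auto intro: summable_phiS phiS_pos)



definition cf :: "real \<Rightarrow> real \<Rightarrow> nat \<Rightarrow> real" where
  "cf a b N = (\<Sum>i\<le>N. 1 / (fact i * fact (N - i) * Gamma (real i + a + 1) * Gamma (real (N - i) + b + 1)))"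

lemma not_nonpos_pos: "(z::real) > 0 \<Longrightarrow> z \<notin> \<int>\<^sub>\<le>\<^sub>0"
  by (auto dest: nonpos_Ints_nonpos)

lemma cf_closed:
  assumes a: "a > -1" and b: "b > -1"
  shows "cf a b N = ((a + b + 2 * real N) gchoose N) / (Gamma (a + real N + 1) * Gamma (b + real N + 1))"
proof -
  have GA: "Gamma (a + real N + 1) > 0" "Gamma (b + real N + 1) > 0" using a b by auto
  have trm: "1 / (fact i * fact (N - i) * Gamma (real i + a + 1) * Gamma (real (N - i) + b + 1))
     = ((b + real N) gchoose i) * ((a + real N) gchoose (N - i)) / (Gamma (a + real N + 1) * Gamma (b + real N + 1))"
    if i: "i \<le> N" for i
  proof -
    have e1: "(b + real N) gchoose i = Gamma (b + real N + 1) / (fact i * Gamma (b + real N - real i + 1))"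
      by (rule gbinomial_Gamma) (rule not_nonpos_pos, use b in auto)
    have e2: "(a + real N) gchoose (N - i) = Gamma (a + real N + 1) / (fact (N - i) * Gamma (a + real N - real (N - i) + 1))"
      by (rule gbinomial_Gamma) (rule not_nonpos_pos, use a in auto)
    have r1: "a + real N - real (N - i) + 1 = real i + a + 1" using i by (simp add: of_nat_diff)
    have r2: "b + real N - real i + 1 = real (N - i) + b + 1" using i by (simp add: of_nat_diff)
    have p1: "Gamma (real i + a + 1) > 0" "Gamma (real (N - i) + b + 1) > 0" using a b by auto
    show ?thesis unfolding e1 e2 r1 r2 using GA p1 by (simp add: field_simps)
  qed
  have "cf a b N = (\<Sum>i\<in>{0..N}. ((b + real N) gchoose i) * ((a + real N) gchoose (N - i))) / (Gamma (a + real N + 1) * Gamma (b + real N + 1))"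
    unfolding cf_def sum_divide_distrib atLeast0AtMost apply (rule sum.cong, simp) apply (rule trm) by simp
  also have "(\<Sum>i\<in>{0..N}. ((b + real N) gchoose i) * ((a + real N) gchoose (N - i))) = (b + real N + (a + real N)) gchoose N"
    by (rule gbinomial_Vandermonde)
  also have "b + real N + (a + real N) = a + b + 2 * real N" by simp
  finally show ?thesis .
qed

lemma phi_prod:
  assumes a: "a > -1" and b: "b > -1" and w: "w \<ge> 0"
  shows "(\<lambda>k. w ^ k * cf a b k) sums (phi a w * phi b w)"
proof -
  have s1: "summable (\<lambda>k. norm (phiS a w k))" using summable_phiS[OF a w] phiS_nonneg[OF a w] by simp
  have s2: "summable (\<lambda>k. norm (phiS b w k))" using summable_phiS[OF b w] phiS_nonneg[OF b w] by simp
  have "(\<lambda>k. \<Sum>i\<le>k. phiS a w i * phiS b w (k - i)) sums (phi a w * phi b w)"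
    unfolding phi_def by (rule Cauchy_product_sums[OF s1 s2])
  moreover have "(\<Sum>i\<le>k. phiS a w i * phiS b w (k - i)) = w ^ k * cf a b k" for k
    unfolding cf_def sum_distrib_left
  proof (intro sum.cong refl)
    fix i assume "i \<in> {..k}"
    then have "w ^ i * w ^ (k - i) = w ^ k" by (simp flip: power_add)
    then show "phiS a w i * phiS b w (k - i) = w ^ k * (1 / (fact i * fact (k - i) * Gamma (real i + a + 1) * Gamma (real (k - i) + b + 1)))"
      unfolding phiS_def by (simp add: field_simps)
  qed
  ultimately show ?thesis by simp
qed

lemma cf_turan:
  assumes s: "s > -1"
  shows "cf s (s + 2) N < cf (s + 1) (s + 1) N"
proof -
  define K where "K = (2 * s + 2 + 2 * real N) gchoose N"
  have K: "K = Gamma (2 * s + 2 + 2 * real N + 1) / (fact N * Gamma (2 * s + 2 + 2 * real N - real N + 1))"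
    unfolding K_def by (rule gbinomial_Gamma) (rule not_nonpos_pos, use s in auto)
  have Kpos: "K > 0" unfolding K using s by (auto intro!: divide_pos_pos)
  define G1 where "G1 = Gamma (s + real N + 1)"
  have G1: "G1 > 0" using s by (simp add: G1_def)
  have G2: "Gamma (s + 1 + real N + 1) = (s + real N + 1) * G1"
    unfolding G1_def using Gamma_plus1[OF not_nonpos_pos[of "s + real N + 1"]] s by (simp add: add_ac)
  have G3: "Gamma (s + 2 + real N + 1) = (s + real N + 2) * ((s + real N + 1) * G1)"
    using Gamma_plus1[OF not_nonpos_pos[of "s + 1 + real N + 1"]] s G2 by (simp add: add_ac)
  have e1: "s + 1 + (s + 1) + 2 * real N = 2 * s + 2 + 2 * real N" by simp
  have e2: "s + (s + 2) + 2 * real N = 2 * s + 2 + 2 * real N" by simp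
  have c1: "cf (s + 1) (s + 1) N = K / (((s + real N + 1) * G1) * ((s + real N + 1) * G1))"
    using cf_closed[of "s+1" "s+1" N] s unfolding e1 G2 K_def by simp
  have c2: "cf s (s + 2) N = K / (G1 * ((s + real N + 2) * ((s + real N + 1) * G1)))"
    using cf_closed[of "s" "s+2" N] s unfolding e2 G3 K_def G1_def by simp
  have p: "s + real N + 1 > 0" using s by simp
  have d1: "0 < ((s + real N + 1) * G1) * ((s + real N + 1) * G1)" using G1 p by simp
  have d2: "((s + real N + 1) * G1) * ((s + real N + 1) * G1) < G1 * ((s + real N + 2) * ((s + real N + 1) * G1))"
  proof -
    have "((s + real N + 1) * G1) * ((s + real N + 1) * G1) = (s + real N + 1) * ((s + real N + 1) * G1 * G1)" by (simp add: ac_simps)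
    also have "\<dots> < (s + real N + 2) * ((s + real N + 1) * G1 * G1)"
      by (rule mult_strict_right_mono) (use G1 p in auto)
    also have "\<dots> = G1 * ((s + real N + 2) * ((s + real N + 1) * G1))" by (simp add: ac_simps)
    finally show ?thesis .
  qed
  show ?thesis unfolding c1 c2
    by (rule divide_strict_left_mono[OF d2 Kpos]) (use d1 d2 in simp)
qed

lemma phi_turan:
  assumes s: "s > -1" and w: "w > 0"
  shows "phi s w * phi (s + 2) w < (phi (s + 1) w)^2"
proof -
  have A: "(\<lambda>k. w ^ k * cf s (s+2) k) sums (phi s w * phi (s+2) w)" by (rule phi_prod) (use s w in auto)
  have B: "(\<lambda>k. w ^ k * cf (s+1) (s+1) k) sums (phi (s+1) w * phi (s+1) w)" by (rule phi_prod) (use s w in auto)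
  have C: "(\<lambda>k. w ^ k * cf (s+1) (s+1) k - w ^ k * cf s (s+2) k) sums (phi (s+1) w * phi (s+1) w - phi s w * phi (s+2) w)"
    by (rule sums_diff[OF B A])
  have pos: "0 < w ^ k * cf (s+1) (s+1) k - w ^ k * cf s (s+2) k" for k
  proof -
    have "w ^ k * cf s (s+2) k < w ^ k * cf (s+1) (s+1) k"
      by (rule mult_strict_left_mono[OF cf_turan[OF s]]) (use w in simp)
    then show ?thesis by linarith
  qed
  have "0 < (\<Sum>k. w ^ k * cf (s+1) (s+1) k - w ^ k * cf s (s+2) k)"
    by (rule suminf_pos[OF sums_summable[OF C] pos])
  also have "\<dots> = phi (s+1) w * phi (s+1) w - phi s w * phi (s+2) w"
    using C by (rule sums_unique[symmetric])
  finally show ?thesis by (simp add: power2_eq_square)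
qed



definition pp :: "real \<Rightarrow> nat \<Rightarrow> real" where
  "pp x m = exp (- x) * x ^ m / fact m"

definition gg :: "real \<Rightarrow> real \<Rightarrow> real" where
  "gg a t = exp (- t) * t powr a / Gamma (a + 1)"

lemma pp_pos: "x > 0 \<Longrightarrow> pp x m > 0" unfolding pp_def by simp

lemma gg_nonneg: "a > -1 \<Longrightarrow> gg a t \<ge> 0" unfolding gg_def by (auto intro!: divide_nonneg_pos)
lemma gg_pos: "a > -1 \<Longrightarrow> t > 0 \<Longrightarrow> gg a t > 0" unfolding gg_def by (auto intro!: divide_pos_pos)
lemma gg_zero [simp]: "gg a 0 = 0" unfolding gg_def by simp

lemma bessel_rep:
  assumes w: "w > 0" and s: "s > -1"
  shows "besselI s (2 * sqrt w) = sqrt w powr s * phi s w"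
proof -
  have "(2 * sqrt w / 2) powr (2 * real m + s) / (fact m * Gamma (real m + s + 1)) = sqrt w powr s * phiS s w m" for m
  proof -
    have u: "sqrt w > 0" using w by simp
    have "sqrt w powr (2 * real m + s) = sqrt w powr s * sqrt w powr (real (2 * m))"
      by (simp add: powr_add[symmetric] add_ac)
    also have "sqrt w powr (real (2 * m)) = w ^ m"
    proof -
      have "sqrt w powr (real (2 * m)) = sqrt w ^ (2 * m)" by (rule powr_realpow[OF u])
      also have "\<dots> = w ^ m" using w by (simp add: power_mult)
      finally show ?thesis .
    qed
    finally show ?thesis unfolding phiS_def by simp
  qed
  then have "besselI s (2 * sqrt w) = (\<Sum>m. sqrt w powr s * phiS s w m)"
    unfolding besselI_def by simp
  also have "\<dots> = sqrt w powr s * phi s w"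
    unfolding phi_def by (rule suminf_mult[OF summable_phiS]) (use s w in auto)
  finally show ?thesis .
qed

lemma F_rep:
  assumes x: "x > 0" and y: "y > 0" and s: "s > -1"
  shows "marcumF s x y = exp (- x - y) * y powr s * phi s (x * y)"
proof -
  have "(y / x) powr (s / 2) * sqrt (x * y) powr s = y powr s"
    using x y by (simp add: powr_def ln_div ln_sqrt ln_mult exp_add[symmetric] field_simps)
  then show ?thesis unfolding marcumF_def bessel_rep[OF mult_pos_pos[OF x y] s]
    by (metis (no_types, lifting) mult.assoc mult.commute)
qed

lemma term_eq:
  assumes t: "t \<ge> 0"
  shows "exp (- x - t) * t powr s * phiS s (x * t) m = pp x m * gg (real m + s) t"
proof (cases "t = 0")
  case True then show ?thesis by simp
next
  case False
  then have t: "t > 0" using t by simp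
  have "t powr (real m + s) = t ^ m * t powr s" using t by (simp add: powr_add powr_realpow)
  then show ?thesis unfolding phiS_def pp_def gg_def
    by (simp add: exp_diff exp_minus power_mult_distrib field_simps)
qed

lemma F_series:
  assumes x: "x > 0" and y: "y > 0" and s: "s > -1"
  shows "(\<lambda>m. pp x m * gg (real m + s) y) sums marcumF s x y"
proof -
  have "(\<lambda>m. exp (- x - y) * y powr s * phiS s (x * y) m) sums (exp (- x - y) * y powr s * phi s (x * y))"
    unfolding phi_def by (rule sums_mult[OF summable_sums[OF summable_phiS]]) (use x y s in auto)
  then show ?thesis unfolding F_rep[OF x y s] term_eq[OF less_imp_le[OF y]] .
qed

definition integrand :: "real \<Rightarrow> real \<Rightarrow> real \<Rightarrow> real" where
  "integrand \<mu> x t = t powr ((\<mu> - 1) / 2) * exp (- t - x) * besselI (\<mu> - 1) (2 * sqrt (x * t))"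

lemma integrand_series:
  assumes x: "x > 0" and t: "t \<ge> 0" and mu: "\<mu> > 0"
  shows "(\<lambda>m. pp x m * gg (real m + (\<mu> - 1)) t) sums (x powr ((1 - \<mu>) / 2) * integrand \<mu> x t)"
proof (cases "t = 0")
  case True then show ?thesis by (simp add: integrand_def)
next
  case False
  then have t: "t > 0" using t by simp
  have s: "\<mu> - 1 > -1" using mu by simp
  have pre: "x powr ((1 - \<mu>) / 2) * t powr ((\<mu> - 1) / 2) * sqrt (x * t) powr (\<mu> - 1) = t powr (\<mu> - 1)"
    using x t by (simp add: powr_def ln_sqrt ln_mult exp_add[symmetric] field_simps)
  have "x powr ((1 - \<mu>) / 2) * integrand \<mu> x t = exp (- x - t) * t powr (\<mu> - 1) * phi (\<mu> - 1) (x * t)"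
    unfolding integrand_def bessel_rep[OF mult_pos_pos[OF x t] s] using pre
    by (simp add: exp_diff exp_minus field_simps)
  moreover have "(\<lambda>m. exp (- x - t) * t powr (\<mu> - 1) * phiS (\<mu> - 1) (x * t) m) sums (exp (- x - t) * t powr (\<mu> - 1) * phi (\<mu> - 1) (x * t))"
    unfolding phi_def by (rule sums_mult[OF summable_sums[OF summable_phiS]]) (use x t s in auto)
  ultimately show ?thesis unfolding term_eq[OF less_imp_le[OF t]] by simp
qed



lemma gg_cont:
  assumes b: "b > 0"
  shows "continuous_on {0..y} (gg b)"
proof -
  have "continuous_on {0..y} (\<lambda>t::real. t powr b)"
    by (rule continuous_on_powr') (use b in \<open>auto intro: continuous_intros\<close>)
  moreover have "Gamma (b + 1) > 0" using b by simp
  ultimately show ?thesis unfolding gg_def by (auto intro!: continuous_intros)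
qed

lemma gg_deriv:
  assumes b: "b > 0" and t: "t > 0"
  shows "(gg b has_real_derivative (gg (b - 1) t - gg b t)) (at t)"
proof -
  have G: "Gamma (b + 1) = b * Gamma b" by (rule Gamma_plus1) (rule not_nonpos_pos[OF b])
  have Gp: "Gamma b > 0" using b by simp
  have d1: "((\<lambda>t. t powr b) has_real_derivative b * t powr (b - 1)) (at t)"
    by (rule has_real_derivative_powr[OF t])
  have d2: "((\<lambda>t. exp (- t)) has_real_derivative - exp (- t)) (at t)"
    by (auto intro!: derivative_eq_intros)
  have "((\<lambda>t. exp (- t) * t powr b / Gamma (b + 1)) has_real_derivative
        (- exp (- t) * t powr b + b * t powr (b - 1) * exp (- t)) / Gamma (b + 1)) (at t)"
    by (intro DERIV_cdivide DERIV_mult d1 d2)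
  moreover have "(- exp (- t) * t powr b + b * t powr (b - 1) * exp (- t)) / Gamma (b + 1) = gg (b - 1) t - gg b t"
  proof -
    have nz: "Gamma b \<noteq> 0" "b \<noteq> 0" "b * Gamma b \<noteq> 0" using b Gp mult_pos_pos[OF b Gp] by linarith+
    show ?thesis unfolding gg_def G using nz b by (simp add: divide_simps)
  qed
  ultimately show ?thesis unfolding gg_def[abs_def] by simp
qed

lemma gg_step:
  assumes b: "b > 0" and y: "y > 0"
  shows "gg (b - 1) integrable_on {0..y}"
    and "integral {0..y} (gg (b - 1)) = gg b y + integral {0..y} (gg b)"
proof -
  have h: "((\<lambda>t. gg (b - 1) t - gg b t) has_integral (gg b y - gg b 0)) {0..y}"
    apply (rule fundamental_theorem_of_calculus_interior)
    using y gg_cont[OF b] gg_deriv[OF b] by (auto simp: has_real_derivative_iff_has_vector_derivative[symmetric])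
  have i2: "gg b integrable_on {0..y}" by (rule integrable_continuous_real[OF gg_cont[OF b]])
  have "(\<lambda>t. (gg (b - 1) t - gg b t) + gg b t) integrable_on {0..y}"
    by (rule integrable_add[OF has_integral_integrable[OF h] i2])
  then show i1: "gg (b - 1) integrable_on {0..y}" by simp
  have "integral {0..y} (gg (b - 1)) = integral {0..y} (\<lambda>t. gg (b - 1) t - gg b t) + integral {0..y} (gg b)"
    using integral_diff[OF i1 i2] by simp
  also have "integral {0..y} (\<lambda>t. gg (b - 1) t - gg b t) = gg b y" using h by (simp add: integral_unique)
  finally show "integral {0..y} (gg (b - 1)) = gg b y + integral {0..y} (gg b)" .
qed

lemma gg_bound:
  assumes c: "c \<ge> 0" and t: "0 \<le> t" "t \<le> y"
  shows "gg c t \<le> y powr c / Gamma (c + 1)"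
proof -
  have Gp: "Gamma (c + 1) > 0" using c by simp
  have "exp (- t) * t powr c \<le> 1 * y powr c"
    by (rule mult_mono) (use c t in \<open>auto intro: powr_mono2\<close>)
  then show ?thesis unfolding gg_def using Gp by (simp add: divide_right_mono)
qed

lemma gamma_series:
  assumes b: "b > 0" and y: "y > 0"
  shows "(\<lambda>k. gg (b + real k) y) sums integral {0..y} (gg (b - 1))"
proof -
  define J where "J c = integral {0..y} (gg (c - 1))" for c
  have step: "J c = gg c y + J (c + 1)" if "c > 0" for c
    unfolding J_def using gg_step(2)[OF that y] by simp
  have split: "J b = (\<Sum>k<K. gg (b + real k) y) + J (b + real K)" for K
  proof (induction K)
    case 0 then show ?case by simp
  next
    case (Suc K)
    have "J (b + real K) = gg (b + real K) y + J (b + real K + 1)" by (rule step) (use b in simp)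
    then show ?case using Suc by (simp add: add_ac)
  qed
  have Jnn: "J c \<ge> 0" if "c > 0" for c
    unfolding J_def by (rule integral_nonneg[OF gg_step(1)[OF that y]]) (use that in \<open>auto intro: gg_nonneg\<close>)
  have summ: "summable (\<lambda>k. gg (b + real k) y)"
  proof (rule summableI_nonneg_bounded)
    show "0 \<le> gg (b + real k) y" for k using b by (intro gg_nonneg) simp
    show "(\<Sum>i<K. gg (b + real i) y) \<le> J b" for K using split[of K] Jnn[of "b + real K"] b by simp
  qed
  have lim0: "(\<lambda>k. gg (b + real k) y) \<longlonglongrightarrow> 0" by (rule summable_LIMSEQ_zero[OF summ])
  have bnd: "J (b + real (Suc K)) \<le> y * exp y * gg (b + real K) y" for K
  proof -
    have cK: "b + real K \<ge> 0" using b by simp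
    have i: "gg (b + real K) integrable_on {0..y}" using gg_step(1)[of "b + real K + 1" y] b y by simp
    have "J (b + real (Suc K)) = integral {0..y} (gg (b + real K))" unfolding J_def by (simp add: add_ac)
    also have "\<dots> \<le> integral {0..y} (\<lambda>t. y powr (b + real K) / Gamma (b + real K + 1))"
      by (rule integral_le[OF i]) (use cK in \<open>auto intro: gg_bound\<close>)
    also have "\<dots> = y * (y powr (b + real K) / Gamma (b + real K + 1))" using y by simp
    also have "\<dots> = y * exp y * gg (b + real K) y" unfolding gg_def by (simp add: exp_minus field_simps)
    finally show ?thesis .
  qed
  have "(\<lambda>K. J (b + real (Suc K))) \<longlonglongrightarrow> 0"
  proof (rule real_tendsto_sandwich[where f="\<lambda>_. 0" and h="\<lambda>K. y * exp y * gg (b + real K) y"])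
    show "\<forall>\<^sub>F n in sequentially. 0 \<le> J (b + real (Suc n))" using Jnn b by (auto intro!: always_eventually)
    show "\<forall>\<^sub>F n in sequentially. J (b + real (Suc n)) \<le> y * exp y * gg (b + real n) y" using bnd by (auto intro!: always_eventually)
    show "(\<lambda>K. y * exp y * gg (b + real K) y) \<longlonglongrightarrow> 0" using tendsto_mult_left[OF lim0, of "y * exp y"] by simp
  qed simp
  then have "(\<lambda>K. J (b + real K)) \<longlonglongrightarrow> 0" by (rule LIMSEQ_imp_Suc)
  then have "(\<lambda>K. J b - J (b + real K)) \<longlonglongrightarrow> J b - 0" by (intro tendsto_intros)
  moreover have eq: "(\<Sum>k<K. gg (b + real k) y) = J b - J (b + real K)" for K
    using split[of K] by linarith
  ultimately have "(\<lambda>K. \<Sum>k<K. gg (b + real k) y) \<longlonglongrightarrow> J b" by simp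
  then show ?thesis unfolding sums_def J_def by simp
qed



lemma fubini_nonneg:
  fixes f :: "nat \<Rightarrow> nat \<Rightarrow> real"
  assumes nn: "\<And>k m. f k m \<ge> 0"
    and r: "\<And>k. (\<lambda>m. f k m) sums a k"
    and S: "a sums S"
  shows "(\<lambda>m. \<Sum>k. f k m) sums S"
proof -
  have ann: "a k \<ge> 0" for k by (rule sums_le[OF _ sums_zero r[of k]]) (rule nn)
  have hr: "((\<lambda>m. (\<lambda>(k,m). f k m) (k, m)) has_sum a k) UNIV" for k
    using sums_nonneg_imp_has_sum[OF r[of k] nn] by simp
  have ha: "(a has_sum S) UNIV" by (rule sums_nonneg_imp_has_sum[OF S ann])
  have sF: "(\<lambda>(k,m). f k m) summable_on Sigma UNIV (\<lambda>_. UNIV)"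
    by (rule summable_on_SigmaI[where g=a]) (use hr ha nn in \<open>auto intro: has_sum_imp_summable\<close>)
  have hF: "((\<lambda>(k,m). f k m) has_sum S) (Sigma UNIV (\<lambda>_. UNIV))"
    by (rule has_sum_SigmaI[where g=a]) (use hr ha sF in auto)
  have hF': "((\<lambda>(m,k). f k m) has_sum S) (UNIV \<times> UNIV)"
    using has_sum_swap[THEN iffD1, OF hF] by simp
  have sm: "(\<lambda>k. f k m) summable_on UNIV" for m
    using summable_on_SigmaD1[of "\<lambda>m k. f k m" UNIV "\<lambda>_. UNIV" m] hF' has_sum_imp_summable by auto
  have hm: "((\<lambda>k. (\<lambda>(m,k). f k m) (m, k)) has_sum (\<Sum>k. f k m)) UNIV" for m
  proof -
    have "((\<lambda>k. f k m) has_sum infsum (\<lambda>k. f k m) UNIV) UNIV" using sm[of m] by (rule has_sum_infsum)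
    moreover then have "(\<lambda>k. f k m) sums infsum (\<lambda>k. f k m) UNIV" by (rule has_sum_imp_sums)
    ultimately show ?thesis by (simp add: sums_unique[symmetric])
  qed
  have "((\<lambda>m. \<Sum>k. f k m) has_sum S) UNIV"
    by (rule has_sum_SigmaD[OF hF'[unfolded Sigma_def[symmetric]]]) (use hm in auto)
  then show ?thesis by (rule has_sum_imp_sums)
qed

lemma F_pos:
  assumes x: "x > 0" and y: "y > 0" and s: "s > -1"
  shows "marcumF s x y > 0"
  unfolding F_rep[OF x y s] using phi_pos[OF s mult_pos_pos[OF x y]] y by simp

lemma F_bound:
  assumes x: "x > 0" and y: "y > 0" and mu: "\<mu> > 0"
  shows "marcumF (\<mu> + real k) x y \<le> (exp (- x - y) * y powr \<mu> * phi \<mu> (x * y)) * (inverse (fact k) * y ^ k)"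
proof -
  have w: "x * y > 0" using x y by simp
  have "phiS (\<mu> + real k) (x * y) m \<le> phiS \<mu> (x * y) m / fact k" for m
  proof -
    have le: "Gamma (real m + \<mu> + 1) * fact k \<le> Gamma (real m + \<mu> + 1 + real k)"
      by (rule Gamma_fact_le) (use mu in simp)
    have e: "real m + (\<mu> + real k) + 1 = real m + \<mu> + 1 + real k" by simp
    have p: "Gamma (real m + \<mu> + 1) > 0" using mu by simp
    have p2: "Gamma (real m + \<mu> + 1 + real k) > 0" using mu by simp
    have "(x*y) ^ m / (fact m * Gamma (real m + \<mu> + 1 + real k)) \<le> (x*y) ^ m / (fact m * (Gamma (real m + \<mu> + 1) * fact k))"
      by (rule divide_left_mono) (use le p p2 w in \<open>auto intro!: mult_left_mono mult_pos_pos\<close>)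
    then show ?thesis unfolding phiS_def e by (simp add: field_simps)
  qed
  then have ph: "phi (\<mu> + real k) (x * y) \<le> phi \<mu> (x * y) / fact k"
    unfolding phi_def
    using suminf_le[OF _ summable_phiS summable_divide[OF summable_phiS]] mu w
    by (simp add: suminf_divide[OF summable_phiS, symmetric])
  have "marcumF (\<mu> + real k) x y = exp (- x - y) * (y powr \<mu> * y ^ k) * phi (\<mu> + real k) (x * y)"
  proof -
    have sk: "\<mu> + real k > -1" using mu by simp
    show ?thesis unfolding F_rep[OF x y sk] using mu y by (simp add: powr_add powr_realpow)
  qed
  also have "\<dots> \<le> exp (- x - y) * (y powr \<mu> * y ^ k) * (phi \<mu> (x * y) / fact k)"
    by (rule mult_left_mono[OF ph]) (use y in simp)
  also have "\<dots> = (exp (- x - y) * y powr \<mu> * phi \<mu> (x * y)) * (inverse (fact k) * y ^ k)"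
    by (simp add: field_simps)
  finally show ?thesis .
qed

lemma F_summable:
  assumes x: "x > 0" and y: "y > 0" and mu: "\<mu> > 0"
  shows "summable (\<lambda>k. marcumF (\<mu> + real k) x y)"
proof (rule summable_comparison_test'[where N=0])
  show "summable (\<lambda>k. (exp (- x - y) * y powr \<mu> * phi \<mu> (x * y)) * (inverse (fact k) * y ^ k))"
    by (intro summable_mult summable_exp)
  show "norm (marcumF (\<mu> + real k) x y) \<le> (exp (- x - y) * y powr \<mu> * phi \<mu> (x * y)) * (inverse (fact k) * y ^ k)" for k
    using F_bound[OF x y mu, of k] F_pos[OF x y, of "\<mu> + real k"] mu by simp
qed



lemma P_series:
  assumes x: "x > 0" and y: "y > 0" and mu: "\<mu> > 0"
  shows "(\<lambda>k. marcumF (\<mu> + real k) x y) sums marcumP \<mu> x y"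
proof -
  define S where "S = (\<Sum>k. marcumF (\<mu> + real k) x y)"
  define J where "J c = integral {0..y} (gg (c - 1))" for c
  define f where "f k m = pp x m * gg (real m + \<mu> + real k) y" for k m
  have fnn: "f k m \<ge> 0" for k m unfolding f_def using x mu by (auto intro!: mult_nonneg_nonneg gg_nonneg less_imp_le[OF pp_pos])
  have r: "(\<lambda>m. f k m) sums marcumF (\<mu> + real k) x y" for k
  proof -
    have "(\<lambda>m. pp x m * gg (real m + (\<mu> + real k)) y) sums marcumF (\<mu> + real k) x y"
      by (rule F_series[OF x y]) (use mu in simp)
    then show ?thesis unfolding f_def by (simp add: add.assoc)
  qed
  have Ssum: "(\<lambda>k. marcumF (\<mu> + real k) x y) sums S"
    unfolding S_def by (rule summable_sums[OF F_summable[OF x y mu]])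
  have fub: "(\<lambda>m. \<Sum>k. f k m) sums S" by (rule fubini_nonneg[OF fnn r Ssum])
  have inner: "(\<Sum>k. f k m) = pp x m * J (real m + \<mu>)" for m
  proof -
    have "(\<lambda>k. gg (real m + \<mu> + real k) y) sums J (real m + \<mu>)"
      unfolding J_def by (rule gamma_series[OF _ y]) (use mu in simp)
    then have "(\<lambda>k. f k m) sums (pp x m * J (real m + \<mu>))" unfolding f_def by (rule sums_mult)
    then show ?thesis by (rule sums_unique[symmetric])
  qed
  have Zs: "(\<lambda>m. pp x m * J (real m + \<mu>)) sums S" using fub unfolding inner .
  define g where "g t = x powr ((1 - \<mu>) / 2) * integrand \<mu> x t" for t
  define h where "h m t = pp x m * gg (real m + (\<mu> - 1)) t" for m t
  define fK where "fK K t = (\<Sum>m<K. h m t)" for K t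
  have eqm: "real m + (\<mu> - 1) = (real m + \<mu>) - 1" for m by simp
  have hint: "h m integrable_on {0..y}" for m
  proof -
    have "gg (real m + \<mu> - 1) integrable_on {0..y}" by (rule gg_step(1)[OF _ y]) (use mu in simp)
    then show ?thesis unfolding h_def eqm by (rule integrable_on_mult_right)
  qed
  have hJ: "integral {0..y} (h m) = pp x m * J (real m + \<mu>)" for m
    unfolding h_def J_def eqm by simp
  have hnn: "h m t \<ge> 0" for m t unfolding h_def using x mu by (auto intro!: mult_nonneg_nonneg gg_nonneg less_imp_le[OF pp_pos])
  have intK: "integral {0..y} (fK K) = (\<Sum>m<K. pp x m * J (real m + \<mu>))" for K
    unfolding fK_def by (subst integral_sum) (use hint hJ in auto)
  have Zsum: "summable (\<lambda>m. pp x m * J (real m + \<mu>))" using Zs by (rule sums_summable)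
  have Znn: "pp x m * J (real m + \<mu>) \<ge> 0" for m
    using hJ[of m] integral_nonneg[OF hint[of m]] hnn by metis
  have mc: "g integrable_on {0..y} \<and> ((\<lambda>K. integral {0..y} (fK K)) \<longlongrightarrow> integral {0..y} g) sequentially"
  proof (rule monotone_convergence_increasing)
    show "fK K integrable_on {0..y}" for K unfolding fK_def by (rule integrable_sum) (use hint in auto)
    show "fK K t \<le> fK (Suc K) t" for K t unfolding fK_def using hnn[of K t] by simp
    show "(\<lambda>K. fK K t) \<longlonglongrightarrow> g t" if "t \<in> {0..y}" for t
    proof -
      have "(\<lambda>m. h m t) sums g t" unfolding h_def g_def
        by (rule integrand_series[OF x _ mu]) (use that in simp)
      then show ?thesis unfolding fK_def sums_def by simp
    qed
    show "bounded (range (\<lambda>K. integral {0..y} (fK K)))"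
      unfolding bounded_iff
    proof (intro exI ballI)
      fix z assume "z \<in> range (\<lambda>K. integral {0..y} (fK K))"
      then obtain K where z: "z = (\<Sum>m<K. pp x m * J (real m + \<mu>))" using intK by auto
      have "0 \<le> z" unfolding z by (intro sum_nonneg Znn)
      moreover have "z \<le> S" unfolding z sums_unique[OF Zs] by (rule sum_le_suminf[OF Zsum]) (use Znn in auto)
      ultimately show "norm z \<le> S" by simp
    qed
  qed
  have "(\<lambda>K. integral {0..y} (fK K)) \<longlonglongrightarrow> S" unfolding intK using Zs by (simp add: sums_def)
  then have "integral {0..y} g = S" using mc LIMSEQ_unique by blast
  moreover have "marcumP \<mu> x y = integral {0..y} g"
    unfolding marcumP_def g_def integrand_def by simp
  ultimately show ?thesis using Ssum by simp
qed



lemma F_turan: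
  assumes x: "x > 0" and y: "y > 0" and s: "s > -1"
  shows "marcumF s x y * marcumF (s + 2) x y < (marcumF (s + 1) x y)^2"
proof -
  define E where "E = exp (- x - y)"
  have E: "E > 0" unfolding E_def by simp
  have s1: "s + 1 > -1" "s + 2 > -1" using s by auto
  have w: "x * y > 0" using x y by simp
  have pw: "y powr s * y powr (s + 2) = y powr (s + 1) * y powr (s + 1)"
    by (simp add: powr_add[symmetric])
  have pp: "(E * y powr (s + 1))^2 > 0" using E y by simp
  have "marcumF s x y * marcumF (s + 2) x y = (E * y powr (s + 1))^2 * (phi s (x*y) * phi (s+2) (x*y))"
    unfolding F_rep[OF x y s] F_rep[OF x y s1(2)] E_def[symmetric]
    using pw by (simp add: power2_eq_square algebra_simps)
  also have "\<dots> < (E * y powr (s + 1))^2 * (phi (s+1) (x*y))^2"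
    by (rule mult_strict_left_mono[OF phi_turan[OF s w] pp])
  also have "\<dots> = (marcumF (s + 1) x y)^2"
    unfolding F_rep[OF x y s1(1)] E_def[symmetric] by (simp add: power_mult_distrib)
  finally show ?thesis .
qed

context
  fixes x y :: real
  assumes x: "x > 0" and y: "y > 0"
begin

abbreviation "FF s \<equiv> marcumF s x y"

lemma FF_pos: "s > -1 \<Longrightarrow> FF s > 0" using F_pos[OF x y] by blast

lemma FF_H:
  assumes a: "a > -1" and m: "m \<ge> 1"
  shows "FF (a + real m + 1) * FF a < FF (a + 1) * FF (a + real m)"
  using m
proof (induction m)
  case 0 then show ?case by simp
next
  case (Suc m)
  show ?case
  proof (cases "m = 0")
    case True
    then show ?thesis using F_turan[OF x y a] by (simp add: power2_eq_square add_ac mult.commute)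
  next
    case False
    then have IH: "FF (a + real m + 1) * FF a < FF (a + 1) * FF (a + real m)" using Suc by simp
    have am: "a + real m > -1" using a by simp
    have T: "FF (a + real m) * FF (a + real m + 2) < FF (a + real m + 1) * FF (a + real m + 1)"
      using F_turan[OF x y am] by (simp add: power2_eq_square)
    have p0: "FF a > 0" "FF (a + real m) > 0" "FF (a + real m + 1) > 0" "FF (a + 1) > 0"
      using a by (auto intro!: FF_pos)
    have "FF (a + real m + 2) * FF a * FF (a + real m) = (FF (a + real m) * FF (a + real m + 2)) * FF a"
      by (simp add: ac_simps)
    also have "\<dots> < (FF (a + real m + 1) * FF (a + real m + 1)) * FF a"
      by (rule mult_strict_right_mono[OF T p0(1)])
    also have "\<dots> = FF (a + real m + 1) * (FF (a + real m + 1) * FF a)" by (simp add: ac_simps)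
    also have "\<dots> < FF (a + real m + 1) * (FF (a + 1) * FF (a + real m))"
      by (rule mult_strict_left_mono[OF IH p0(3)])
    also have "\<dots> = FF (a + 1) * FF (a + real m + 1) * FF (a + real m)" by (simp add: ac_simps)
    finally have "FF (a + real m + 2) * FF a < FF (a + 1) * FF (a + real m + 1)"
      using p0(2) by (simp only: mult_less_cancel_right)
    moreover have "a + real (Suc m) + 1 = a + real m + 2" "a + real (Suc m) = a + real m + 1" by simp_all
    ultimately show ?thesis by (simp only:)
  qed
qed

lemma FF_K:
  assumes a: "a > -1" and d: "d \<ge> 1" and k: "k \<ge> 1"
  shows "FF (a + real d + real k) * FF a < FF (a + real k) * FF (a + real d)"
  using k
proof (induction k)
  case 0 then show ?case by simp
next
  case (Suc k)
  show ?case
  proof (cases "k = 0")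
    case True
    then show ?thesis using FF_H[OF a d] by (simp add: add_ac)
  next
    case False
    then have IH: "FF (a + real d + real k) * FF a < FF (a + real k) * FF (a + real d)" using Suc by simp
    have ak: "a + real k > -1" using a by simp
    have H: "FF (a + real k + real d + 1) * FF (a + real k) < FF (a + real k + 1) * FF (a + real k + real d)"
      by (rule FF_H[OF ak d])
    have p0: "FF a > 0" "FF (a + real k) > 0" "FF (a + real k + 1) > 0"
      using a by (auto intro!: FF_pos)
    have e1: "a + real k + real d + 1 = a + real d + real (Suc k)" by simp
    have e2: "a + real k + real d = a + real d + real k" by simp
    have e3: "a + real k + 1 = a + real (Suc k)" by simp
    have "FF (a + real d + real (Suc k)) * FF a * FF (a + real k) = (FF (a + real k + real d + 1) * FF (a + real k)) * FF a"
      unfolding e1 by (simp add: ac_simps)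
    also have "\<dots> < (FF (a + real k + 1) * FF (a + real k + real d)) * FF a"
      by (rule mult_strict_right_mono[OF H p0(1)])
    also have "\<dots> = FF (a + real k + 1) * (FF (a + real d + real k) * FF a)" unfolding e2 by (simp add: ac_simps)
    also have "\<dots> < FF (a + real k + 1) * (FF (a + real k) * FF (a + real d))"
      by (rule mult_strict_left_mono[OF IH p0(3)])
    also have "\<dots> = FF (a + real (Suc k)) * FF (a + real d) * FF (a + real k)" unfolding e3 by (simp add: ac_simps)
    finally show ?thesis
      using p0(2) by (simp only: mult_less_cancel_right)
  qed
qed

end



lemma tail_bound:
  assumes x: "x > 0" and y: "y > 0" and nu: "\<nu> > 0"
    and hyp: "marcumF \<nu> x y > marcumF (\<nu> + real q + 1) x y"
  shows "(\<Sum>j. marcumF (\<nu> + real j) x y) < marcumU \<nu> q x y"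
proof -
  define G where "G j = marcumF (\<nu> + real j) x y" for j
  define d where "d = Suc q"
  have d1: "d \<ge> 1" unfolding d_def by simp
  have sG: "summable G" unfolding G_def by (rule F_summable[OF x y nu])
  have Gpos: "G j > 0" for j unfolding G_def by (rule F_pos[OF x y]) (use nu in simp)
  define T where "T = suminf G"
  define T' where "T' = (\<Sum>j. G (j + d))"
  define Sq where "Sq = sum G {..<d}"
  have sG': "summable (\<lambda>j. G (j + d))" using sG by (rule summable_ignore_initial_segment)
  have TT: "T = T' + Sq" unfolding T_def T'_def Sq_def by (rule suminf_split_initial_segment[OF sG])
  have G0: "G 0 = marcumF \<nu> x y" unfolding G_def by simp
  have Gd: "G d = marcumF (\<nu> + real q + 1) x y" unfolding G_def d_def by (simp add: add_ac)
  have Sqe: "Sq = (\<Sum>k\<le>q. marcumF (\<nu> + real k) x y)" unfolding Sq_def d_def G_def lessThan_Suc_atMost ..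
  have nnu: "\<nu> > -1" using nu by simp
  have termK: "G (j + d) * G 0 < G d * G j" if "j \<ge> 1" for j
    using FF_K[OF x y nnu d1 that] unfolding G_def by (simp add: add_ac mult.commute)
  define D where "D j = G d * G j - G (j + d) * G 0" for j
  have Dnn: "D j \<ge> 0" for j
  proof (cases "j = 0")
    case True then show ?thesis unfolding D_def by simp
  next
    case False then show ?thesis using termK[of j] unfolding D_def by simp
  qed
  have sD: "summable D" unfolding D_def by (intro summable_diff summable_mult summable_mult2 sG sG')
  have D1: "0 < D 1" using termK[of 1] unfolding D_def by simp
  have "0 < suminf D" using suminf_pos_iff[OF sD Dnn] D1 by blast
  also have "suminf D = G d * T - T' * G 0"
    unfolding D_def T_def T'_def
    by (simp add: suminf_diff[symmetric] summable_mult summable_mult2 sG sG' suminf_mult suminf_mult2)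
  finally have claim: "T' * G 0 < G d * (T' + Sq)" using TT by simp
  have Dp: "G 0 - G d > 0" using hyp G0 Gd by simp
  have e: "T * (G 0 - G d) = T' * G 0 - G d * T' + Sq * G 0 - G d * Sq" unfolding TT by (simp add: algebra_simps)
  have "T * (G 0 - G d) < Sq * G 0" using e claim by (simp add: algebra_simps)
  then have "T < Sq * G 0 / (G 0 - G d)" using Dp by (simp add: pos_less_divide_eq)
  then show ?thesis unfolding marcumU_def Sqe[symmetric] G0[symmetric] Gd[symmetric] T_def G_def[symmetric]
    by (simp add: Sq_def d_def lessThan_Suc_atMost mult.commute)
qed

theorem proposition4:
  fixes \<mu> x y :: real and n q :: nat
  assumes "\<mu> > 0" and "x > 0" and "y > 0"
  shows "(\<Sum>k\<le>n. marcumF (\<mu> + real k) x y) < marcumP \<mu> x y \<and>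
    (marcumF (\<mu> + real n + 1) x y > marcumF (\<mu> + real n + real q + 2) x y \<longrightarrow>
      marcumP \<mu> x y < (\<Sum>k\<le>n. marcumF (\<mu> + real k) x y) + marcumU (\<mu> + real n + 1) q x y)"
proof -
  note mu = assms(1) and x = assms(2) and y = assms(3)
  define Fk where "Fk k = marcumF (\<mu> + real k) x y" for k
  have Ps: "Fk sums marcumP \<mu> x y" unfolding Fk_def by (rule P_series[OF x y mu])
  have sF: "summable Fk" using Ps by (rule sums_summable)
  have Pe: "marcumP \<mu> x y = suminf Fk" using Ps by (rule sums_unique)
  have Fpos: "Fk k > 0" for k unfolding Fk_def by (rule F_pos[OF x y]) (use mu in simp)
  have part1: "(\<Sum>k\<le>n. Fk k) < marcumP \<mu> x y"
    unfolding Pe lessThan_Suc_atMost[symmetric] by (rule sum_less_suminf[OF sF]) (use Fpos in auto)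
  have part2: "marcumP \<mu> x y < (\<Sum>k\<le>n. Fk k) + marcumU (\<mu> + real n + 1) q x y"
    if hyp: "marcumF (\<mu> + real n + 1) x y > marcumF (\<mu> + real n + real q + 2) x y"
  proof -
    have split: "suminf Fk = (\<Sum>j. Fk (j + Suc n)) + (\<Sum>k<Suc n. Fk k)"
      by (rule suminf_split_initial_segment[OF sF])
    have tl: "(\<lambda>j. Fk (j + Suc n)) = (\<lambda>j. marcumF (\<mu> + real n + 1 + real j) x y)"
      unfolding Fk_def by (rule ext) (simp add: add_ac)
    have hyp': "marcumF (\<mu> + real n + 1) x y > marcumF (\<mu> + real n + 1 + real q + 1) x y"
    proof -
      have "\<mu> + real n + 1 + real q + 1 = \<mu> + real n + real q + 2" by simp
      then show ?thesis using hyp by (simp only:)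
    qed
    have "(\<Sum>j. marcumF (\<mu> + real n + 1 + real j) x y) < marcumU (\<mu> + real n + 1) q x y"
      by (rule tail_bound[OF x y _ hyp']) (use mu in simp)
    then show ?thesis unfolding Pe split tl lessThan_Suc_atMost by simp
  qed
  show ?thesis using part1 part2 unfolding Fk_def by blast
qed


end
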